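(* Let $S$ be a finite set of states and $I=\{1,\ldots,n\}$. The following two belief aggregation rules $f:\Delta(S)^I\to\Delta(S)$ are anonymous, single-valued, and satisfy Recursive Invariance: (1) for $|I|$ odd, the geometric median $f(\mathbf{p})=\arg\min_{p\in\Delta(S)}\sum_{i\in I}\|p_i-p\|$ (Euclidean norm); (2) the equal-wealth parimutuel price rule, where $f(\mathbf{p})$ is the equilibrium price $\rho$ of the parimutuel equilibrium with equal wealth of the market $(\mathbb{R}^S_+,p_i)_{i\in I}$.
   Context: $\Delta(S)$ is the set of probability distributions on $S$. Recursive Invariance: for all $\mathbf{p}\in\Delta(S)^I$ and $(\lambda_i)_{i\in I}\in[0,1]^I$, $f\big(((1-\lambda_i)p_i+\lambda_i f(\mathbf{p}))_{i\in I}\big)=f(\mathbf{p})$. The parimutuel market $(\mathbb{R}^S_+,p_i)_{i\in I}$ has consumers $i$ with consumption set $\mathbb{R}^S_+$ and linear utility $x\mapsto p_i\cdot x$. A parimutuel equilibrium with equal wealth is a pair $(\rho,\mathbf{x})$ with $\rho\in\Delta(S)$, $\mathbf{x}=(x_1,\ldots,x_n)\in(\mathbb{R}^S_+)^I$, such that (1) for each $i$, $\rho\cdot x_i\le 1/n$ and $p_i\cdot x_i\ge p_i\cdot y$ for all $y\in\mathbb{R}^S_+$ with $\rho\cdot y\le 1/n$; and (2) $\sum_i x_i=(1,\ldots,1)$. *)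

theory Defs
  imports "HOL-Analysis.Analysis"
begin

text \<open>Agents: I = {0..<n} (a relabelling of {1..n}). A profile is P :: nat => real^'s,
  only the values P i for i < n matter.\<close>

definition belief_simplex :: "(real^'s::finite) set" where
  "belief_simplex = {p. (\<forall>s. 0 \<le> p $ s) \<and> (\<Sum>s\<in>UNIV. p $ s) = 1}"

definition profile :: "nat \<Rightarrow> (nat \<Rightarrow> real^'s::finite) \<Rightarrow> bool" where
  "profile n P \<longleftrightarrow> (\<forall>i<n. P i \<in> belief_simplex)"

definition anonymous :: "nat \<Rightarrow> ((nat \<Rightarrow> real^'s::finite) \<Rightarrow> real^'s) \<Rightarrow> bool" where
  "anonymous n f \<longleftrightarrow>
     (\<forall>P \<sigma>. profile n P \<and> \<sigma> permutes {..<n} \<longrightarrow> f (P \<circ> \<sigma>) = f P)"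

definition recursive_invariance :: "nat \<Rightarrow> ((nat \<Rightarrow> real^'s::finite) \<Rightarrow> real^'s) \<Rightarrow> bool" where
  "recursive_invariance n f \<longleftrightarrow>
     (\<forall>P lam. profile n P \<and> (\<forall>i<n. 0 \<le> lam i \<and> lam i \<le> 1) \<longrightarrow>
        f (\<lambda>i. (1 - lam i) *\<^sub>R P i + lam i *\<^sub>R f P) = f P)"

definition geo_median_set :: "nat \<Rightarrow> (nat \<Rightarrow> real^'s::finite) \<Rightarrow> (real^'s) set" where
  "geo_median_set n P = {q \<in> belief_simplex. \<forall>r\<in>belief_simplex.
      (\<Sum>i<n. norm (P i - q)) \<le> (\<Sum>i<n. norm (P i - r))}"

definition geo_median :: "nat \<Rightarrow> (nat \<Rightarrow> real^'s::finite) \<Rightarrow> real^'s" where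
  "geo_median n P = (THE q. q \<in> geo_median_set n P)"

definition pm_equilibrium :: "nat \<Rightarrow> (nat \<Rightarrow> real^'s::finite) \<Rightarrow> real^'s \<Rightarrow> (nat \<Rightarrow> real^'s) \<Rightarrow> bool" where
  "pm_equilibrium n P \<rho> x \<longleftrightarrow>
     \<rho> \<in> belief_simplex \<and>
     (\<forall>i<n. (\<forall>s. 0 \<le> x i $ s) \<and> \<rho> \<bullet> x i \<le> 1 / real n \<and>
        (\<forall>y. (\<forall>s. 0 \<le> y $ s) \<and> \<rho> \<bullet> y \<le> 1 / real n \<longrightarrow> P i \<bullet> y \<le> P i \<bullet> x i)) \<and>
     (\<Sum>i<n. x i) = (\<chi> s. 1)"

definition pm_price :: "nat \<Rightarrow> (nat \<Rightarrow> real^'s::finite) \<Rightarrow> real^'s" where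
  "pm_price n P = (THE \<rho>. \<exists>x. pm_equilibrium n P \<rho> x)"

end

theory Submission
  imports Defs
begin


lemma simplex_iff: "p \<in> belief_simplex \<longleftrightarrow> (\<forall>s. 0 \<le> p $ s) \<and> (\<Sum>s\<in>UNIV. p $ s) = 1"
  by (simp add: belief_simplex_def)

lemma simplex_convex:
  assumes "p \<in> belief_simplex" "q \<in> belief_simplex" "0 \<le> l" "l \<le> 1"
  shows "(1 - l) *\<^sub>R p + l *\<^sub>R q \<in> belief_simplex"
proof -
  have "(\<Sum>s\<in>UNIV. ((1 - l) *\<^sub>R p + l *\<^sub>R q) $ s) = (1 - l) * (\<Sum>s\<in>UNIV. p $ s) + l * (\<Sum>s\<in>UNIV. q $ s)"
    by (simp add: sum.distrib sum_distrib_left)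
  also have "\<dots> = 1" using assms by (simp add: simplex_iff)
  finally show ?thesis using assms by (auto simp: simplex_iff)
qed

lemma simplex_compact: "compact (belief_simplex :: (real^'s::finite) set)"
proof -
  have cl: "closed (belief_simplex :: (real^'s) set)"
  proof -
    have "belief_simplex = (\<Inter>s. {p::real^'s. 0 \<le> p $ s}) \<inter> {p. (\<Sum>s\<in>UNIV. p $ s) = 1}"
      by (auto simp: belief_simplex_def)
    moreover have "closed {p::real^'s. (\<Sum>s\<in>UNIV. p $ s) = 1}"
      by (intro closed_Collect_eq continuous_intros)
    moreover have "closed {p::real^'s. 0 \<le> p $ s}" for s
      by (intro closed_Collect_le continuous_intros)
    ultimately show ?thesis by (metis closed_INT closed_Int)
  qed
  have "belief_simplex \<subseteq> cbox (0::real^'s) (\<chi> s. 1)"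
  proof
    fix p :: "real^'s" assume p: "p \<in> belief_simplex"
    have "p $ s \<le> 1" for s
    proof -
      have "p $ s \<le> (\<Sum>s\<in>UNIV. p $ s)"
        by (rule member_le_sum) (use p in \<open>auto simp: simplex_iff\<close>)
      then show ?thesis using p by (simp add: simplex_iff)
    qed
    then show "p \<in> cbox 0 (\<chi> s. 1)" using p by (auto simp: mem_box_cart simplex_iff)
  qed
  then have "bounded (belief_simplex :: (real^'s) set)" by (meson bounded_cbox bounded_subset)
  with cl show ?thesis by (simp add: compact_eq_bounded_closed)
qed

lemma simplex_nonempty: "(\<chi> s. 1 / real CARD('s)) \<in> (belief_simplex :: (real^'s::finite) set)"
  by (simp add: simplex_iff)

lemma same_dir_norm:
  fixes x y :: "'a::real_normed_vector"
  assumes "norm x *\<^sub>R y = norm y *\<^sub>R x"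
  shows "norm (x - y) = \<bar>norm x - norm y\<bar>"
proof (cases "x = 0")
  case True then show ?thesis by simp
next
  case False
  then have nx: "norm x > 0" by simp
  have "y = (norm y / norm x) *\<^sub>R x"
  proof -
    have "(norm y / norm x) *\<^sub>R x = (1 / norm x) *\<^sub>R (norm y *\<^sub>R x)" by (simp add: divide_inverse)
    also have "\<dots> = (1 / norm x) *\<^sub>R (norm x *\<^sub>R y)" using assms by simp
    also have "\<dots> = y" using nx by simp
    finally show ?thesis by simp
  qed
  then have "x - y = (1 - norm y / norm x) *\<^sub>R x" by (metis scaleR_left_diff_distrib scaleR_one)
  then have "norm (x - y) = \<bar>1 - norm y / norm x\<bar> * norm x" by simp
  also have "\<dots> = \<bar>(1 - norm y / norm x) * norm x\<bar>" using nx by (simp add: abs_mult)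
  also have "(1 - norm y / norm x) * norm x = norm x - norm y" using nx by (simp add: field_simps)
  finally show ?thesis .
qed

lemma pm_parity:
  fixes s :: "nat \<Rightarrow> real"
  assumes "\<forall>i<n. s i = 1 \<or> s i = -1"
  shows "\<exists>k::int. (\<Sum>i<n. s i) = real n + 2 * of_int k"
  using assms
proof (induction n)
  case 0 then show ?case by auto
next
  case (Suc n)
  then obtain k :: int where k: "(\<Sum>i<n. s i) = real n + 2 * of_int k" by auto
  have "s n = 1 \<or> s n = -1" using Suc.prems by auto
  then show ?case
  proof
    assume "s n = 1" then show ?thesis using k by (intro exI[of _ k]) simp
  next
    assume "s n = -1" then show ?thesis using k by (intro exI[of _ "k - 1"]) simp
  qed
qed

lemma parity_even:
  fixes s :: "nat \<Rightarrow> real"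
  assumes "\<forall>i<n. s i = 1 \<or> s i = -1" "(\<Sum>i<n. s i) = 0"
  shows "even n"
proof -
  obtain k :: int where "(\<Sum>i<n. s i) = real n + 2 * of_int k" using pm_parity[OF assms(1)] by blast
  with assms(2) have "real n = of_int (2 * (-k))" by simp
  then have "int n = 2 * (-k)" by linarith
  then show ?thesis by presburger
qed


lemma geo_exists:
  fixes P :: "nat \<Rightarrow> real^'s::finite"
  shows "\<exists>q. q \<in> geo_median_set n P"
proof -
  have "continuous_on belief_simplex (\<lambda>r::real^'s. \<Sum>i<n. norm (P i - r))"
    by (intro continuous_intros)
  then obtain q where "q \<in> belief_simplex" "\<forall>r\<in>belief_simplex. (\<Sum>i<n. norm (P i - q)) \<le> (\<Sum>i<n. norm (P i - r))"
    using continuous_attains_inf[OF simplex_compact, of "\<lambda>r. \<Sum>i<n. norm (P i - r)"] simplex_nonempty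
    by blast
  then show ?thesis by (auto simp: geo_median_set_def)
qed

lemma geo_unique:
  fixes P :: "nat \<Rightarrow> real^'s::finite"
  assumes odd: "odd n" and q1: "q1 \<in> geo_median_set n P" and q2: "q2 \<in> geo_median_set n P"
  shows "q1 = q2"
proof (rule ccontr)
  assume ne: "q1 \<noteq> q2"
  define f where "f r = (\<Sum>i<n. norm (P i - r))" for r
  have s1: "q1 \<in> belief_simplex" and s2: "q2 \<in> belief_simplex"
    using q1 q2 by (auto simp: geo_median_set_def)
  have m1: "\<And>r. r \<in> belief_simplex \<Longrightarrow> f q1 \<le> f r" using q1 by (auto simp: geo_median_set_def f_def)
  have m2: "\<And>r. r \<in> belief_simplex \<Longrightarrow> f q2 \<le> f r" using q2 by (auto simp: geo_median_set_def f_def)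
  have eq12: "f q1 = f q2" using m1[OF s2] m2[OF s1] by simp
  define c where "c = (1 - 1/2) *\<^sub>R q1 + (1/2::real) *\<^sub>R q2"
  have sc: "c \<in> belief_simplex" unfolding c_def by (rule simplex_convex[OF s1 s2]) auto
  define a where "a i = P i - q1" for i
  define b where "b i = P i - q2" for i
  have Pc: "P i - c = (1/2::real) *\<^sub>R (a i + b i)" for i
    unfolding a_def b_def c_def by (simp add: vec_eq_iff field_simps)
  have fc: "f c = (\<Sum>i<n. norm (a i + b i)) / 2"
    unfolding f_def Pc by (simp add: sum_divide_distrib)
  have "(\<Sum>i<n. norm (a i) + norm (b i) - norm (a i + b i)) = f q1 + f q2 - 2 * f c"
    unfolding fc by (simp add: sum.distrib sum_subtractf f_def a_def b_def)
  also have "\<dots> \<le> 0" using m1[OF sc] eq12 by simp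
  finally have le0: "(\<Sum>i<n. norm (a i) + norm (b i) - norm (a i + b i)) \<le> 0" .
  have nonneg: "\<forall>i\<in>{..<n}. 0 \<le> norm (a i) + norm (b i) - norm (a i + b i)"
  proof
    fix i
    have "norm (a i + b i) \<le> norm (a i) + norm (b i)" by (rule norm_triangle_ineq)
    then show "0 \<le> norm (a i) + norm (b i) - norm (a i + b i)" by simp
  qed
  have sum0: "(\<Sum>i<n. norm (a i) + norm (b i) - norm (a i + b i)) = 0"
  proof -
    have "0 \<le> (\<Sum>i<n. norm (a i) + norm (b i) - norm (a i + b i))"
      by (rule sum_nonneg) (use nonneg in auto)
    then show ?thesis using le0 by linarith
  qed
  have eqi: "\<forall>i\<in>{..<n}. norm (a i) + norm (b i) - norm (a i + b i) = 0"
    using sum_nonneg_eq_0_iff[of "{..<n}" "\<lambda>i. norm (a i) + norm (b i) - norm (a i + b i)"] nonneg sum0 by simp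
  define d where "d = q2 - q1"
  have dpos: "norm d > 0" using ne by (simp add: d_def)
  have abd: "a i - b i = d" for i by (simp add: a_def b_def d_def)
  have absd: "\<bar>norm (a i) - norm (b i)\<bar> = norm d" if "i < n" for i
  proof -
    have "norm (a i + b i) = norm (a i) + norm (b i)" using eqi that by auto
    then have "norm (a i) *\<^sub>R b i = norm (b i) *\<^sub>R a i" by (simp add: norm_triangle_eq)
    then have "norm (a i - b i) = \<bar>norm (a i) - norm (b i)\<bar>" by (intro same_dir_norm) simp
    then show ?thesis by (simp add: abd)
  qed
  define sg where "sg i = (norm (a i) - norm (b i)) / norm d" for i
  have "\<forall>i<n. sg i = 1 \<or> sg i = -1"
  proof (intro allI impI)
    fix i assume "i < n"
    from absd[OF this] dpos show "sg i = 1 \<or> sg i = -1"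
      unfolding sg_def by (cases "norm (a i) - norm (b i) \<ge> 0") (auto simp: field_simps)
  qed
  moreover have "(\<Sum>i<n. sg i) = 0"
  proof -
    have "(\<Sum>i<n. sg i) = (f q1 - f q2) / norm d"
      unfolding sg_def f_def a_def b_def by (simp add: sum_divide_distrib[symmetric] sum_subtractf)
    then show ?thesis using eq12 by simp
  qed
  ultimately have "even n" by (rule parity_even)
  with odd show False by simp
qed

lemma geo_median_eq:
  fixes P :: "nat \<Rightarrow> real^'s::finite"
  assumes "odd n" "q \<in> geo_median_set n P"
  shows "geo_median n P = q"
  unfolding geo_median_def
  using assms geo_unique by blast

lemma geo_set_perm:
  fixes P :: "nat \<Rightarrow> real^'s::finite"
  assumes "\<sigma> permutes {..<n}"
  shows "geo_median_set n (P \<circ> \<sigma>) = geo_median_set n P"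
proof -
  have "(\<Sum>i<n. norm ((P \<circ> \<sigma>) i - r)) = (\<Sum>i<n. norm (P i - r))" for r
    using sum.permute[OF assms, of "\<lambda>i. norm (P i - r)"] by (simp add: comp_def)
  then show ?thesis by (simp add: geo_median_set_def)
qed

lemma geo_RI:
  fixes P :: "nat \<Rightarrow> real^'s::finite"
  assumes q: "q \<in> geo_median_set n P" and lam: "\<forall>i<n. 0 \<le> lam i \<and> lam i \<le> 1"
  shows "q \<in> geo_median_set n (\<lambda>i. (1 - lam i) *\<^sub>R P i + lam i *\<^sub>R q)"
proof -
  define P' where "P' i = (1 - lam i) *\<^sub>R P i + lam i *\<^sub>R q" for i
  have sq: "q \<in> belief_simplex" using q by (simp add: geo_median_set_def)
  have e1: "norm (P' i - q) = (1 - lam i) * norm (P i - q)" if "i < n" for i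
  proof -
    have "P' i - q = (1 - lam i) *\<^sub>R (P i - q)" by (simp add: P'_def algebra_simps)
    then show ?thesis using lam that by simp
  qed
  have e2: "norm (P i - r) \<le> lam i * norm (P i - q) + norm (P' i - r)" if "i < n" for i r
  proof -
    have "P i - P' i = lam i *\<^sub>R (P i - q)" by (simp add: P'_def algebra_simps)
    then have "norm (P i - P' i) = lam i * norm (P i - q)" using lam that by simp
    moreover have "norm (P i - r) \<le> norm (P i - P' i) + norm (P' i - r)"
      by (metis norm_triangle_ineq diff_add_cancel add_diff_eq)
    ultimately show ?thesis by simp
  qed
  have "(\<Sum>i<n. norm (P' i - q)) \<le> (\<Sum>i<n. norm (P' i - r))" if r: "r \<in> belief_simplex" for r
  proof -
    have "(\<Sum>i<n. norm (P' i - q)) = (\<Sum>i<n. norm (P i - q) - lam i * norm (P i - q))"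
      by (rule sum.cong) (use e1 in \<open>auto simp: algebra_simps\<close>)
    also have "\<dots> = (\<Sum>i<n. norm (P i - q)) - (\<Sum>i<n. lam i * norm (P i - q))"
      by (simp add: sum_subtractf)
    also have "\<dots> \<le> (\<Sum>i<n. norm (P i - r)) - (\<Sum>i<n. lam i * norm (P i - q))"
      using q r by (simp add: geo_median_set_def)
    also have "(\<Sum>i<n. norm (P i - r)) \<le> (\<Sum>i<n. lam i * norm (P i - q) + norm (P' i - r))"
      by (rule sum_mono) (use e2 in auto)
    then have "(\<Sum>i<n. norm (P i - r)) - (\<Sum>i<n. lam i * norm (P i - q)) \<le> (\<Sum>i<n. norm (P' i - r))"
      by (simp add: sum.distrib)
    finally show ?thesis .
  qed
  with sq show ?thesis by (simp add: geo_median_set_def P'_def)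
qed


lemma inner_cart: fixes x y :: "real^'s::finite" shows "x \<bullet> y = (\<Sum>s\<in>UNIV. x $ s * y $ s)"
  by (simp add: inner_vec_def)

lemma pm_budget:
  fixes P :: "nat \<Rightarrow> real^'s::finite"
  assumes eq: "pm_equilibrium n P \<rho> x" and i: "i < n"
  shows "\<rho> \<bullet> x i = 1 / real n"
proof -
  have le: "\<forall>i\<in>{..<n}. 0 \<le> 1 / real n - \<rho> \<bullet> x i" using eq by (auto simp: pm_equilibrium_def)
  have "(\<Sum>i<n. \<rho> \<bullet> x i) = \<rho> \<bullet> (\<Sum>i<n. x i)" by (simp add: inner_sum_right)
  also have "\<dots> = \<rho> \<bullet> (\<chi> s. 1)" using eq by (simp add: pm_equilibrium_def)
  also have "\<dots> = 1" using eq by (simp add: inner_cart pm_equilibrium_def simplex_iff)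
  finally have s1: "(\<Sum>i<n. \<rho> \<bullet> x i) = 1" .
  have "(\<Sum>i<n. 1 / real n - \<rho> \<bullet> x i) = 0" using s1 i by (simp add: sum_subtractf)
  then have "\<forall>i\<in>{..<n}. 1 / real n - \<rho> \<bullet> x i = 0"
    using sum_nonneg_eq_0_iff[of "{..<n}" "\<lambda>i. 1 / real n - \<rho> \<bullet> x i"] le by simp
  then show ?thesis using i by simp
qed

lemma pm_K1:
  fixes P :: "nat \<Rightarrow> real^'s::finite"
  assumes eq: "pm_equilibrium n P \<rho> x" and i: "i < n"
  shows "P i $ s \<le> real n * (P i \<bullet> x i) * \<rho> $ s"
proof -
  have opt: "\<And>y. (\<forall>s. 0 \<le> y $ s) \<Longrightarrow> \<rho> \<bullet> y \<le> 1 / real n \<Longrightarrow> P i \<bullet> y \<le> P i \<bullet> x i"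
    using eq i by (auto simp: pm_equilibrium_def)
  have rho0: "0 \<le> \<rho> $ s" using eq by (auto simp: pm_equilibrium_def simplex_iff)
  have npos: "real n > 0" using i by simp
  show ?thesis
  proof (cases "\<rho> $ s = 0")
    case True
    show ?thesis
    proof (rule ccontr)
      assume "\<not> ?thesis"
      then have pos: "P i $ s > 0" using True by simp
      define c where "c = (\<bar>P i \<bullet> x i\<bar> + 1) / P i $ s"
      have c0: "c \<ge> 0" using pos by (simp add: c_def)
      have "(\<forall>s'. 0 \<le> axis s c $ s')" using c0 by (simp add: axis_def)
      moreover have "\<rho> \<bullet> axis s c \<le> 1 / real n" using True by (simp add: inner_axis)
      ultimately have "P i \<bullet> axis s c \<le> P i \<bullet> x i" by (rule opt)
      moreover have "P i \<bullet> axis s c = \<bar>P i \<bullet> x i\<bar> + 1" using pos by (simp add: inner_axis c_def)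
      ultimately show False by simp
    qed
  next
    case False
    then have rpos: "\<rho> $ s > 0" using rho0 by simp
    define c where "c = 1 / (real n * \<rho> $ s)"
    have c0: "c \<ge> 0" using rpos npos by (simp add: c_def)
    have "(\<forall>s'. 0 \<le> axis s c $ s')" using c0 by (simp add: axis_def)
    moreover have "\<rho> \<bullet> axis s c \<le> 1 / real n" using rpos by (simp add: inner_axis c_def)
    ultimately have "P i \<bullet> axis s c \<le> P i \<bullet> x i" by (rule opt)
    then have "P i $ s / (real n * \<rho> $ s) \<le> P i \<bullet> x i" by (simp add: inner_axis c_def)
    then show ?thesis using rpos npos by (simp add: divide_le_eq mult.commute mult.left_commute)
  qed
qed

lemma pm_u_pos:
  fixes P :: "nat \<Rightarrow> real^'s::finite"
  assumes eq: "pm_equilibrium n P \<rho> x" and i: "i < n" and Pi: "P i \<in> belief_simplex"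
  shows "1 \<le> real n * (P i \<bullet> x i)"
proof -
  have "1 = (\<Sum>s\<in>UNIV. P i $ s)" using Pi by (simp add: simplex_iff)
  also have "\<dots> \<le> (\<Sum>s\<in>UNIV. real n * (P i \<bullet> x i) * \<rho> $ s)"
    by (rule sum_mono) (rule pm_K1[OF eq i])
  also have "\<dots> = real n * (P i \<bullet> x i) * (\<Sum>s\<in>UNIV. \<rho> $ s)" by (simp add: sum_distrib_left)
  also have "\<dots> = real n * (P i \<bullet> x i)" using eq by (simp add: pm_equilibrium_def simplex_iff)
  finally show ?thesis .
qed

lemma pm_K2:
  fixes P :: "nat \<Rightarrow> real^'s::finite"
  assumes eq: "pm_equilibrium n P \<rho> x" and i: "i < n" and xs: "0 < x i $ s"
  shows "P i $ s = real n * (P i \<bullet> x i) * \<rho> $ s"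
proof -
  define u where "u = P i \<bullet> x i"
  have xnn: "\<forall>s. 0 \<le> x i $ s" using eq i by (auto simp: pm_equilibrium_def)
  have nn: "\<forall>s\<in>UNIV. 0 \<le> x i $ s * (real n * u * \<rho> $ s - P i $ s)"
    using pm_K1[OF eq i] xnn by (simp add: u_def)
  have "(\<Sum>s\<in>UNIV. x i $ s * (real n * u * \<rho> $ s - P i $ s))
      = real n * u * (\<rho> \<bullet> x i) - P i \<bullet> x i"
    by (simp add: inner_cart algebra_simps sum_subtractf sum_distrib_left)
  also have "\<dots> = 0" using pm_budget[OF eq i] i by (simp add: u_def)
  finally have "\<forall>s\<in>UNIV. x i $ s * (real n * u * \<rho> $ s - P i $ s) = 0"
    using sum_nonneg_eq_0_iff[of UNIV "\<lambda>s. x i $ s * (real n * u * \<rho> $ s - P i $ s)"] nn by simp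
  then have "x i $ s * (real n * u * \<rho> $ s - P i $ s) = 0" by simp
  with xs show ?thesis by (simp add: u_def)
qed


lemma pm_unique_le:
  fixes P :: "nat \<Rightarrow> real^'s::finite"
  assumes prof: "profile n P" and eq: "pm_equilibrium n P \<rho> x" and eq': "pm_equilibrium n P \<rho>' x'"
  shows "\<rho>' $ t \<le> \<rho> $ t"
proof (rule ccontr)
  assume nt: "\<not> \<rho>' $ t \<le> \<rho> $ t"
  define S1 where "S1 = {s. \<rho> $ s < \<rho>' $ s}"
  have S1ne: "S1 \<noteq> {}" using nt by (auto simp: S1_def not_le)
  define B where "B i = (\<exists>s\<in>S1. 0 < x' i $ s)" for i
  define w where "w i = (if B i then 1 / real n else 0)" for i
  have xnn: "\<And>i s. i < n \<Longrightarrow> 0 \<le> x i $ s" using eq by (auto simp: pm_equilibrium_def)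
  have xnn': "\<And>i s. i < n \<Longrightarrow> 0 \<le> x' i $ s" using eq' by (auto simp: pm_equilibrium_def)
  have rnn: "\<And>s. 0 \<le> \<rho> $ s" using eq by (auto simp: pm_equilibrium_def simplex_iff)
  have rnn': "\<And>s. 0 \<le> \<rho>' $ s" using eq' by (auto simp: pm_equilibrium_def simplex_iff)
  have sumx: "\<And>s. (\<Sum>i<n. x i $ s) = 1"
  proof -
    fix s
    have "(\<Sum>i<n. x i) $ s = ((\<chi> s. 1) :: real^'s) $ s" using eq by (simp add: pm_equilibrium_def)
    then show "(\<Sum>i<n. x i $ s) = 1" by simp
  qed
  have sumx': "\<And>s. (\<Sum>i<n. x' i $ s) = 1"
  proof -
    fix s
    have "(\<Sum>i<n. x' i) $ s = ((\<chi> s. 1) :: real^'s) $ s" using eq' by (simp add: pm_equilibrium_def)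
    then show "(\<Sum>i<n. x' i $ s) = 1" by simp
  qed
  have swap: "(\<Sum>s\<in>S1. r $ s) = (\<Sum>i<n. \<Sum>s\<in>S1. r $ s * y i $ s)"
    if "\<And>s. (\<Sum>i<n. y i $ s) = 1" for r :: "real^'s" and y :: "nat \<Rightarrow> real^'s"
  proof -
    have "(\<Sum>s\<in>S1. r $ s) = (\<Sum>s\<in>S1. r $ s * (\<Sum>i<n. y i $ s))" using that by simp
    also have "\<dots> = (\<Sum>s\<in>S1. \<Sum>i<n. r $ s * y i $ s)" by (simp add: sum_distrib_left)
    also have "\<dots> = (\<Sum>i<n. \<Sum>s\<in>S1. r $ s * y i $ s)" by (rule sum.swap)
    finally show ?thesis .
  qed
  have a2: "(\<Sum>s\<in>S1. \<rho>' $ s * x' i $ s) \<le> w i" if i: "i < n" for i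
  proof (cases "B i")
    case True
    have "(\<Sum>s\<in>S1. \<rho>' $ s * x' i $ s) \<le> (\<Sum>s\<in>UNIV. \<rho>' $ s * x' i $ s)"
      by (rule sum_mono2) (auto intro: mult_nonneg_nonneg rnn' xnn'[OF i])
    also have "\<dots> = \<rho>' \<bullet> x' i" by (simp add: inner_cart)
    also have "\<dots> = 1 / real n" by (rule pm_budget[OF eq' i])
    finally show ?thesis using True by (simp add: w_def)
  next
    case False
    then have "\<forall>s\<in>S1. x' i $ s = 0" using xnn'[OF i] by (auto simp: B_def order_le_less)
    then show ?thesis using False by (simp add: w_def)
  qed
  have c2: "w i \<le> (\<Sum>s\<in>S1. \<rho> $ s * x i $ s)" if i: "i < n" for i
  proof (cases "B i")
    case False
    have "0 \<le> (\<Sum>s\<in>S1. \<rho> $ s * x i $ s)"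
      by (rule sum_nonneg) (auto intro: mult_nonneg_nonneg rnn xnn[OF i])
    then show ?thesis using False by (simp add: w_def)
  next
    case True
    then obtain s0 where s0: "s0 \<in> S1" "0 < x' i $ s0" by (auto simp: B_def)
    define u where "u = P i \<bullet> x i"
    define u' where "u' = P i \<bullet> x' i"
    have Pi: "P i \<in> belief_simplex" using prof i by (simp add: profile_def)
    have npos: "real n > 0" using i by simp
    have upos: "u > 0"
    proof (rule ccontr)
      assume "\<not> u > 0"
      then have "real n * u \<le> 0" using npos by (simp add: mult_nonneg_nonpos)
      then show False using pm_u_pos[OF eq i Pi] unfolding u_def by simp
    qed
    have u'pos: "u' > 0"
    proof (rule ccontr)
      assume "\<not> u' > 0"
      then have "real n * u' \<le> 0" using npos by (simp add: mult_nonneg_nonpos)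
      then show False using pm_u_pos[OF eq' i Pi] unfolding u'_def by simp
    qed
    have lt0: "\<rho> $ s0 < \<rho>' $ s0" using s0 by (simp add: S1_def)
    have "real n * u' * \<rho>' $ s0 \<le> real n * u * \<rho> $ s0"
      using pm_K2[OF eq' i s0(2)] pm_K1[OF eq i, of s0] by (simp add: u_def u'_def)
    then have A: "u' * \<rho>' $ s0 \<le> u * \<rho> $ s0" using npos by (simp add: mult.assoc)
    have Bq: "u * \<rho> $ s0 < u * \<rho>' $ s0" using upos lt0 by simp
    have uu: "u' < u"
    proof (rule ccontr)
      assume "\<not> u' < u"
      then have "u * \<rho>' $ s0 \<le> u' * \<rho>' $ s0" using rnn'[of s0] by (simp add: mult_right_mono)
      with A Bq show False by simp
    qed
    have zero: "\<rho> $ s * x i $ s = 0" if "s \<notin> S1" for s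
    proof (cases "0 < x i $ s")
      case True
      have le': "\<rho>' $ s \<le> \<rho> $ s" using that by (simp add: S1_def)
      have "real n * u * \<rho> $ s \<le> real n * u' * \<rho>' $ s"
        using pm_K2[OF eq i True] pm_K1[OF eq' i, of s] by (simp add: u_def u'_def)
      then have "u * \<rho> $ s \<le> u' * \<rho>' $ s" using npos by (simp add: mult.assoc)
      also have "\<dots> \<le> u' * \<rho> $ s" using le' u'pos by simp
      finally have "(u - u') * \<rho> $ s \<le> 0" by (simp add: algebra_simps)
      then have "\<rho> $ s \<le> 0" using uu by (simp add: mult_le_0_iff)
      then show ?thesis using rnn[of s] by simp
    next
      case False
      then show ?thesis using xnn[OF i, of s] by simp
    qed
    have "(\<Sum>s\<in>S1. \<rho> $ s * x i $ s) = (\<Sum>s\<in>UNIV. \<rho> $ s * x i $ s)"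
      by (rule sum.mono_neutral_left) (use zero in auto)
    also have "\<dots> = \<rho> \<bullet> x i" by (simp add: inner_cart)
    also have "\<dots> = 1 / real n" by (rule pm_budget[OF eq i])
    finally show ?thesis using True by (simp add: w_def)
  qed
  have "(\<Sum>s\<in>S1. \<rho>' $ s) = (\<Sum>i<n. \<Sum>s\<in>S1. \<rho>' $ s * x' i $ s)" by (rule swap[OF sumx'])
  also have "\<dots> \<le> (\<Sum>i<n. w i)" by (rule sum_mono) (use a2 in auto)
  also have "\<dots> \<le> (\<Sum>i<n. \<Sum>s\<in>S1. \<rho> $ s * x i $ s)" by (rule sum_mono) (use c2 in auto)
  also have "\<dots> = (\<Sum>s\<in>S1. \<rho> $ s)" by (rule swap[OF sumx, symmetric])
  also have "\<dots> < (\<Sum>s\<in>S1. \<rho>' $ s)" by (rule sum_strict_mono) (use S1ne in \<open>auto simp: S1_def\<close>)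
  finally show False by simp
qed

lemma pm_unique:
  fixes P :: "nat \<Rightarrow> real^'s::finite"
  assumes prof: "profile n P" and eq: "pm_equilibrium n P \<rho> x" and eq': "pm_equilibrium n P \<rho>' x'"
  shows "\<rho> = \<rho>'"
  using pm_unique_le[OF prof eq eq'] pm_unique_le[OF prof eq' eq]
  by (simp add: vec_eq_iff order_antisym)


lemma nash_arith:
  fixes a b p q m :: real
  assumes a: "a > 0" and b: "b > 0" and p: "p \<ge> 0" and q: "q \<ge> 0" and m: "m > 0"
    and H: "\<And>t. 0 < t \<Longrightarrow> t \<le> m \<Longrightarrow> (a - t * p) * (b + t * q) \<le> a * b"
  shows "q * a \<le> p * b"
proof (rule ccontr)
  assume "\<not> q * a \<le> p * b"
  then have dpos: "q * a - p * b > 0" by simp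
  define d where "d = q * a - p * b"
  have d0: "d > 0" using dpos by (simp add: d_def)
  define t where "t = min m (d / (p * q + 1))"
  have pq: "p * q \<ge> 0" using p q by simp
  have t0: "t > 0" using m d0 pq by (simp add: t_def)
  have tm: "t \<le> m" by (simp add: t_def)
  have td: "t \<le> d / (p * q + 1)" by (simp add: t_def)
  have "(a - t * p) * (b + t * q) = a * b + t * d - t * (t * (p * q))"
    by (simp add: d_def algebra_simps)
  with H[OF t0 tm] have "t * d \<le> t * (t * (p * q))" by simp
  then have "d \<le> t * (p * q)" using t0 by simp
  also have "\<dots> \<le> d / (p * q + 1) * (p * q)" using mult_right_mono[OF td pq] .
  also have "\<dots> < d"
  proof -
    have "d / (p * q + 1) * (p * q) = d * ((p * q) / (p * q + 1))" by simp
    also have "\<dots> < d * 1" using d0 pq by (intro mult_strict_left_mono) auto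
    finally show ?thesis by simp
  qed
  finally show False by simp
qed

lemma prod_two:
  fixes g :: "nat \<Rightarrow> real"
  assumes "finite A" "i \<in> A" "j \<in> A" "i \<noteq> j"
  shows "prod g A = g i * g j * prod g (A - {i} - {j})"
proof -
  have "prod g A = g i * prod g (A - {i})" using assms by (simp add: prod.remove)
  also have "prod g (A - {i}) = g j * prod g (A - {i} - {j})" using assms by (simp add: prod.remove)
  finally show ?thesis by simp
qed


lemma pm_exists:
  fixes P :: "nat \<Rightarrow> real^'s::finite"
  assumes n: "n \<ge> 1" and prof: "profile n P"
  shows "\<exists>\<rho> x. pm_equilibrium n P \<rho> x"
proof -
  define one :: "real^'s" where "one = (\<chi> s. 1)"
  define K where "K i = (if i < n then cbox (0::real^'s) one else {0})" for i
  define D where "D = (Pi UNIV K) \<inter> {x :: nat \<Rightarrow> real^'s. (\<Sum>i<n. x i) = one}"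
  define F where "F x = (\<Prod>i<n. P i \<bullet> x i)" for x :: "nat \<Rightarrow> real^'s"
  have npos: "real n > 0" using n by simp
  have Pnn: "\<And>i s. i < n \<Longrightarrow> 0 \<le> P i $ s" using prof by (auto simp: profile_def simplex_iff)
  have Psum: "\<And>i. i < n \<Longrightarrow> (\<Sum>s\<in>UNIV. P i $ s) = 1" using prof by (auto simp: profile_def simplex_iff)
  have cK: "compact (K i)" for i by (simp add: K_def)
  have "compactin (product_topology (\<lambda>i. euclidean) UNIV) (PiE UNIV K)"
    by (simp add: compactin_PiE cK)
  then have cPi: "compact (Pi UNIV K)" by (simp add: euclidean_product_topology PiE_UNIV_domain)
  have proj: "continuous_on A (\<lambda>x :: nat \<Rightarrow> real^'s. x i)" for A i
    by (rule continuous_on_subset[OF continuous_on_product_coordinates]) simp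
  have clS: "closed {x :: nat \<Rightarrow> real^'s. (\<Sum>i<n. x i) = one}"
    by (rule closed_Collect_eq) (intro continuous_on_sum proj continuous_on_const)+
  have cD: "compact D" unfolding D_def using cPi clS by (rule compact_Int_closed)
  define x0 where "x0 i = (if i < n then (1 / real n) *\<^sub>R one else 0)" for i
  have x0D: "x0 \<in> D"
  proof -
    have "x0 i \<in> K i" for i
    proof (cases "i < n")
      case True
      have "1 / real n \<le> 1" using n by simp
      then show ?thesis using True npos by (simp add: x0_def K_def one_def mem_box_cart)
    next
      case False then show ?thesis by (simp add: x0_def K_def)
    qed
    moreover have "(\<Sum>i<n. x0 i) = one"
    proof -
      have "(\<Sum>i<n. x0 i) = (\<Sum>i<n. (1 / real n) *\<^sub>R one)" by (rule sum.cong) (auto simp: x0_def)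
      also have "\<dots> = (\<Sum>i<n. 1 / real n) *\<^sub>R one" by (rule scaleR_sum_left[symmetric])
      also have "\<dots> = one" using npos by simp
      finally show ?thesis .
    qed
    ultimately show ?thesis by (simp add: D_def)
  qed
  have F0: "F x0 > 0"
  proof -
    have "F x0 = (\<Prod>i<n. (1 / real n))"
    proof (unfold F_def, rule prod.cong)
      fix i assume "i \<in> {..<n}"
      then show "P i \<bullet> x0 i = 1 / real n" using Psum[of i] by (simp add: x0_def one_def inner_cart sum_divide_distrib[symmetric])
    qed simp
    then show ?thesis using npos by simp
  qed
  have contF: "continuous_on D F"
    unfolding F_def by (intro continuous_on_prod continuous_on_inner continuous_on_const proj)
  obtain xs where xsD: "xs \<in> D" and xsmax: "\<And>y. y \<in> D \<Longrightarrow> F y \<le> F xs"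
    using continuous_attains_sup[OF cD _ contF] x0D by blast
  have xbox: "xs i \<in> cbox 0 one" if "i < n" for i
  proof -
    have "xs i \<in> K i" using xsD by (auto simp: D_def)
    then show ?thesis using that by (simp add: K_def)
  qed
  have xnn: "\<And>i s. i < n \<Longrightarrow> 0 \<le> xs i $ s" and xle: "\<And>i s. i < n \<Longrightarrow> xs i $ s \<le> 1"
    using xbox by (auto simp: mem_box_cart one_def)
  have sumx: "\<And>s. (\<Sum>i<n. xs i $ s) = 1"
  proof -
    fix s
    have "(\<Sum>i<n. xs i) $ s = one $ s" using xsD by (simp add: D_def)
    then show "(\<Sum>i<n. xs i $ s) = 1" by (simp add: one_def)
  qed
  define u where "u i = P i \<bullet> xs i" for i
  have unn: "\<And>i. i < n \<Longrightarrow> 0 \<le> u i"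
    unfolding u_def inner_cart by (auto intro!: sum_nonneg mult_nonneg_nonneg Pnn xnn)
  have upos: "\<And>i. i < n \<Longrightarrow> 0 < u i"
  proof (rule ccontr)
    fix i assume i: "i < n" and "\<not> 0 < u i"
    then have "u i = 0" using unn[OF i] by simp
    then have "F xs = 0" unfolding F_def using i by (auto simp: u_def)
    then show False using xsmax[OF x0D] F0 by simp
  qed
  have L: "P j $ s * u i \<le> P i $ s * u j"
    if i: "i < n" and j: "j < n" and ij: "i \<noteq> j" and xis: "0 < xs i $ s" for i j s
  proof (rule nash_arith[OF upos[OF i] upos[OF j] Pnn[OF i] Pnn[OF j] xis])
    fix t :: real assume t0: "0 < t" and tm: "t \<le> xs i $ s"
    define e :: "real^'s" where "e = axis s 1"
    define c where "c k = (if k = j then t else 0) - (if k = i then t else 0)" for k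
    define y where "y k = xs k + c k *\<^sub>R e" for k
    have ci: "c i = - t" and cj: "c j = t" using ij by (auto simp: c_def)
    have cother: "c k = 0" if "k \<noteq> i" "k \<noteq> j" for k using that by (simp add: c_def)
    have xij: "xs i $ s + xs j $ s \<le> 1"
    proof -
      have "(\<Sum>k\<in>{i,j}. xs k $ s) \<le> (\<Sum>k<n. xs k $ s)"
        by (rule sum_mono2) (use i j xnn in auto)
      then show ?thesis using ij sumx[of s] by simp
    qed
    have yD: "y \<in> D"
    proof -
      have "y k \<in> K k" for k
      proof (cases "k = i \<or> k = j")
        case False
        then have "y k = xs k" by (simp add: y_def cother)
        then show ?thesis using xsD by (auto simp: D_def)
      next
        case True
        then have k: "k < n" using i j by auto
        have "0 \<le> y k $ s' \<and> y k $ s' \<le> 1" for s'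
        proof (cases "s' = s")
          case False
          then have "y k $ s' = xs k $ s'" by (simp add: y_def e_def axis_def)
          then show ?thesis using xnn[OF k] xle[OF k] by simp
        next
          case True
          show ?thesis
          proof (cases "k = i")
            case True
            then have "y k $ s' = xs i $ s - t" using \<open>s' = s\<close> by (simp add: y_def e_def ci)
            then show ?thesis using tm t0 xle[OF i, of s] by simp
          next
            case False
            then have "k = j" using \<open>k = i \<or> k = j\<close> by simp
            then have "y k $ s' = xs j $ s + t" using \<open>s' = s\<close> by (simp add: y_def e_def cj)
            then show ?thesis using tm t0 xij xnn[OF j, of s] by simp
          qed
        qed
        then show ?thesis using k by (simp add: K_def mem_box_cart one_def)
      qed
      moreover have "(\<Sum>k<n. y k) = one"
      proof -
        have "(\<Sum>k<n. c k) = 0" using i j by (simp add: c_def sum_subtractf)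
        then have "(\<Sum>k<n. y k) = (\<Sum>k<n. xs k)"
          by (simp add: y_def sum.distrib scaleR_sum_left[symmetric])
        then show ?thesis using xsD by (simp add: D_def)
      qed
      ultimately show ?thesis by (simp add: D_def)
    qed
    have Fy: "F y = (\<Prod>k<n. u k + c k * P k $ s)"
      unfolding F_def by (rule prod.cong) (simp_all add: y_def u_def e_def inner_add_right inner_axis)
    define R where "R = (\<Prod>k\<in>{..<n} - {i} - {j}. u k)"
    have Rpos: "R > 0" unfolding R_def by (rule prod_pos) (use upos in auto)
    have "F y = (u i + c i * P i $ s) * (u j + c j * P j $ s) * (\<Prod>k\<in>{..<n} - {i} - {j}. u k + c k * P k $ s)"
      unfolding Fy by (rule prod_two) (use i j ij in auto)
    also have "(\<Prod>k\<in>{..<n} - {i} - {j}. u k + c k * P k $ s) = R"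
      unfolding R_def by (rule prod.cong) (auto simp: cother)
    finally have Fy2: "F y = (u i - t * P i $ s) * (u j + t * P j $ s) * R" by (simp add: ci cj)
    have "F xs = (\<Prod>k<n. u k)" by (simp add: F_def u_def)
    also have "\<dots> = u i * u j * R" unfolding R_def by (rule prod_two) (use i j ij in auto)
    finally have Fx2: "F xs = u i * u j * R" .
    from xsmax[OF yD] Fy2 Fx2 have "(u i - t * P i $ s) * (u j + t * P j $ s) * R \<le> u i * u j * R" by simp
    then show "(u i - t * P i $ s) * (u j + t * P j $ s) \<le> u i * u j" using Rpos by simp
  qed
  define \<rho> :: "real^'s" where "\<rho> = (\<chi> s. (\<Sum>k<n. xs k $ s * P k $ s / u k) / real n)"
  have rho_n: "real n * \<rho> $ s = (\<Sum>k<n. xs k $ s * P k $ s / u k)" for s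
    using npos by (simp add: \<rho>_def)
  have G1: "P i $ s / u i \<le> real n * \<rho> $ s" if i: "i < n" for i s
  proof -
    have "P i $ s / u i = (\<Sum>k<n. xs k $ s * (P i $ s / u i))"
      using sum_distrib_right[of "\<lambda>k. xs k $ s" "{..<n}" "P i $ s / u i", symmetric] sumx[of s] by simp
    also have "\<dots> \<le> (\<Sum>k<n. xs k $ s * P k $ s / u k)"
    proof (rule sum_mono)
      fix k assume "k \<in> {..<n}"
      then have k: "k < n" by simp
      show "xs k $ s * (P i $ s / u i) \<le> xs k $ s * P k $ s / u k"
      proof (cases "k = i \<or> xs k $ s = 0")
        case True then show ?thesis by auto
      next
        case False
        then have xk: "0 < xs k $ s" using xnn[OF k, of s] by auto
        have "P i $ s * u k \<le> P k $ s * u i" using L[OF k i _ xk] False by auto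
        then have "P i $ s / u i \<le> P k $ s / u k" using upos[OF i] upos[OF k]
          by (simp add: divide_simps)
        then have "xs k $ s * (P i $ s / u i) \<le> xs k $ s * (P k $ s / u k)"
          using xnn[OF k, of s] by (rule mult_left_mono)
        then show ?thesis by simp
      qed
    qed
    finally show ?thesis by (simp add: rho_n)
  qed
  have G2: "real n * \<rho> $ s \<le> P i $ s / u i" if i: "i < n" and xi: "0 < xs i $ s" for i s
  proof -
    have "(\<Sum>k<n. xs k $ s * P k $ s / u k) \<le> (\<Sum>k<n. xs k $ s * (P i $ s / u i))"
    proof (rule sum_mono)
      fix k assume "k \<in> {..<n}"
      then have k: "k < n" by simp
      show "xs k $ s * P k $ s / u k \<le> xs k $ s * (P i $ s / u i)"
      proof (cases "k = i")
        case True then show ?thesis by auto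
      next
        case False
        have "P k $ s * u i \<le> P i $ s * u k" using L[OF i k _ xi] False by auto
        then have "P k $ s / u k \<le> P i $ s / u i" using upos[OF i] upos[OF k]
          by (simp add: divide_simps)
        then have "xs k $ s * (P k $ s / u k) \<le> xs k $ s * (P i $ s / u i)"
          using xnn[OF k, of s] by (rule mult_left_mono)
        then show ?thesis by simp
      qed
    qed
    also have "\<dots> = P i $ s / u i"
      using sum_distrib_right[of "\<lambda>k. xs k $ s" "{..<n}" "P i $ s / u i", symmetric] sumx[of s] by simp
    finally show ?thesis by (simp add: rho_n)
  qed
  have rnn: "0 \<le> \<rho> $ s" for s
    unfolding \<rho>_def using npos by (auto intro!: sum_nonneg divide_nonneg_nonneg mult_nonneg_nonneg xnn Pnn unn)
  have rsum: "(\<Sum>s\<in>UNIV. \<rho> $ s) = 1"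
  proof -
    have "real n * (\<Sum>s\<in>UNIV. \<rho> $ s) = (\<Sum>s\<in>UNIV. \<Sum>k<n. xs k $ s * P k $ s / u k)"
      by (simp add: sum_distrib_left rho_n)
    also have "\<dots> = (\<Sum>k<n. \<Sum>s\<in>UNIV. xs k $ s * P k $ s / u k)" by (rule sum.swap)
    also have "\<dots> = (\<Sum>k<n. u k / u k)"
    proof (rule sum.cong)
      fix k assume "k \<in> {..<n}"
      have "(\<Sum>s\<in>UNIV. xs k $ s * P k $ s / u k) = (\<Sum>s\<in>UNIV. P k $ s * xs k $ s) / u k"
        by (simp add: sum_divide_distrib mult.commute)
      then show "(\<Sum>s\<in>UNIV. xs k $ s * P k $ s / u k) = u k / u k" by (simp add: u_def inner_cart)
    qed simp
    also have "\<dots> = (\<Sum>k<n. 1)" by (rule sum.cong) (use upos in \<open>auto simp: less_imp_neq[symmetric]\<close>)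
    also have "\<dots> = real n" by simp
    finally show ?thesis using npos by simp
  qed
  have eqA: "\<rho> \<in> belief_simplex" using rnn rsum by (simp add: simplex_iff)
  have eqD: "(\<Sum>i<n. xs i) = (\<chi> s. 1)" using xsD by (simp add: D_def one_def)
  have eqB: "\<rho> \<bullet> xs i \<le> 1 / real n" if i: "i < n" for i
    proof -
      have "\<rho> \<bullet> xs i = (\<Sum>s\<in>UNIV. \<rho> $ s * xs i $ s)" by (simp add: inner_cart)
      also have "\<dots> \<le> (\<Sum>s\<in>UNIV. (P i $ s / u i / real n) * xs i $ s)"
      proof (rule sum_mono)
        fix s
        show "\<rho> $ s * xs i $ s \<le> P i $ s / u i / real n * xs i $ s"
        proof (cases "xs i $ s = 0")
          case True then show ?thesis by simp
        next
          case False
          then have "0 < xs i $ s" using xnn[OF i, of s] by simp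
          from G2[OF i this] have h: "\<rho> $ s * real n \<le> P i $ s / u i" by (simp add: mult.commute)
          have "\<rho> $ s \<le> P i $ s / u i / real n" unfolding pos_le_divide_eq[OF npos] by (rule h)
          then show ?thesis using xnn[OF i, of s] by (rule mult_right_mono)
        qed
      qed
      also have "\<dots> = (\<Sum>s\<in>UNIV. P i $ s * xs i $ s) / u i / real n"
        by (simp add: sum_divide_distrib[symmetric] sum_distrib_right[symmetric])
      also have "\<dots> = 1 / real n" using upos[OF i] by (simp add: u_def inner_cart)
      finally show ?thesis .
    qed
  have eqC: "P i \<bullet> y \<le> P i \<bullet> xs i" if i: "i < n" and y: "(\<forall>s. 0 \<le> y $ s) \<and> \<rho> \<bullet> y \<le> 1 / real n" for i y
  proof -
    have "P i \<bullet> y = (\<Sum>s\<in>UNIV. P i $ s * y $ s)" by (simp add: inner_cart)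
    also have "\<dots> \<le> (\<Sum>s\<in>UNIV. (real n * u i * \<rho> $ s) * y $ s)"
    proof (rule sum_mono)
      fix s
      have "P i $ s \<le> real n * u i * \<rho> $ s"
        using G1[OF i, of s] upos[OF i] by (simp add: divide_simps mult.commute mult.left_commute)
      then show "P i $ s * y $ s \<le> (real n * u i * \<rho> $ s) * y $ s"
        using y by (simp add: mult_right_mono)
    qed
    also have "\<dots> = real n * u i * (\<rho> \<bullet> y)" by (simp add: inner_cart sum_distrib_left mult.assoc)
    also have "\<dots> \<le> real n * u i * (1 / real n)"
      using y upos[OF i] npos by (intro mult_left_mono) auto
    also have "\<dots> = P i \<bullet> xs i" using npos by (simp add: u_def)
    finally show "P i \<bullet> y \<le> P i \<bullet> xs i" .
  qed
  have "pm_equilibrium n P \<rho> xs"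
    unfolding pm_equilibrium_def using eqA eqB eqC eqD xnn by blast
  then show ?thesis by blast
qed


theorem proposition7:
  fixes n :: nat
  shows "(odd n \<longrightarrow>
            (\<forall>P :: nat \<Rightarrow> real^'s::finite. profile n P \<longrightarrow> (\<exists>!q. q \<in> geo_median_set n P)) \<and>
            anonymous n (geo_median n :: (nat \<Rightarrow> real^'s) \<Rightarrow> real^'s) \<and>
            recursive_invariance n (geo_median n :: (nat \<Rightarrow> real^'s) \<Rightarrow> real^'s))
       \<and> (n \<ge> 1 \<longrightarrow>
            (\<forall>P :: nat \<Rightarrow> real^'s. profile n P \<longrightarrow>
               (\<exists>\<rho> x. pm_equilibrium n P \<rho> x) \<and>
               (\<forall>\<rho> x \<rho>' x'. pm_equilibrium n P \<rho> x \<and> pm_equilibrium n P \<rho>' x' \<longrightarrow> \<rho> = \<rho>')) \<and>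
            anonymous n (pm_price n :: (nat \<Rightarrow> real^'s) \<Rightarrow> real^'s) \<and>
            recursive_invariance n (pm_price n :: (nat \<Rightarrow> real^'s) \<Rightarrow> real^'s))"
proof (intro conjI impI)
  assume odd: "odd n"
  show "\<forall>P :: nat \<Rightarrow> real^'s::finite. profile n P \<longrightarrow> (\<exists>!q. q \<in> geo_median_set n P)"
  proof (intro allI impI)
    fix P :: "nat \<Rightarrow> real^'s" assume "profile n P"
    obtain q where q: "q \<in> geo_median_set n P" using geo_exists by blast
    show "\<exists>!q. q \<in> geo_median_set n P"
      by (rule ex1I[of _ q]) (use q geo_unique[OF odd] in blast)+
  qed
  show "anonymous n (geo_median n :: (nat \<Rightarrow> real^'s) \<Rightarrow> real^'s)"
    unfolding anonymous_def geo_median_def using geo_set_perm by metis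
  show "recursive_invariance n (geo_median n :: (nat \<Rightarrow> real^'s) \<Rightarrow> real^'s)"
    unfolding recursive_invariance_def
  proof (intro allI impI)
    fix P :: "nat \<Rightarrow> real^'s" and lam :: "nat \<Rightarrow> real"
    assume A: "profile n P \<and> (\<forall>i<n. 0 \<le> lam i \<and> lam i \<le> 1)"
    obtain q where q: "q \<in> geo_median_set n P" using geo_exists by blast
    have gq: "geo_median n P = q" by (rule geo_median_eq[OF odd q])
    show "geo_median n (\<lambda>i. (1 - lam i) *\<^sub>R P i + lam i *\<^sub>R geo_median n P) = geo_median n P"
      unfolding gq by (rule geo_median_eq[OF odd geo_RI[OF q]]) (use A in blast)
  qed
next
  assume n: "n \<ge> 1"
  have price: "pm_price n P = \<rho>" if "profile n P" "pm_equilibrium n P \<rho> x"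
    for P :: "nat \<Rightarrow> real^'s" and \<rho> x
    unfolding pm_price_def
    by (rule the_equality) (use that pm_unique in blast)+
  show "\<forall>P :: nat \<Rightarrow> real^'s. profile n P \<longrightarrow>
               (\<exists>\<rho> x. pm_equilibrium n P \<rho> x) \<and>
               (\<forall>\<rho> x \<rho>' x'. pm_equilibrium n P \<rho> x \<and> pm_equilibrium n P \<rho>' x' \<longrightarrow> \<rho> = \<rho>')"
    using pm_exists[OF n] pm_unique by blast
  show "anonymous n (pm_price n :: (nat \<Rightarrow> real^'s) \<Rightarrow> real^'s)"
    unfolding anonymous_def
  proof (intro allI impI)
    fix P :: "nat \<Rightarrow> real^'s" and \<sigma> :: "nat \<Rightarrow> nat"
    assume A: "profile n P \<and> \<sigma> permutes {..<n}"
    then have prof: "profile n P" and perm: "\<sigma> permutes {..<n}" by auto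
    have sig: "\<sigma> i < n" if "i < n" for i using permutes_in_image[OF perm] that by simp
    obtain \<rho> x where eq: "pm_equilibrium n P \<rho> x" using pm_exists[OF n prof] by blast
    have prof': "profile n (P \<circ> \<sigma>)" using prof sig by (simp add: profile_def)
    have "(\<Sum>i<n. (x \<circ> \<sigma>) i) = (\<Sum>i<n. x i)" using sum.permute[OF perm, of x] by simp
    then have eq': "pm_equilibrium n (P \<circ> \<sigma>) \<rho> (x \<circ> \<sigma>)"
      using eq sig by (simp add: pm_equilibrium_def)
    show "pm_price n (P \<circ> \<sigma>) = pm_price n P"
      using price[OF prof' eq'] price[OF prof eq] by simp
  qed
  show "recursive_invariance n (pm_price n :: (nat \<Rightarrow> real^'s) \<Rightarrow> real^'s)"
    unfolding recursive_invariance_def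
  proof (intro allI impI)
    fix P :: "nat \<Rightarrow> real^'s" and lam :: "nat \<Rightarrow> real"
    assume A: "profile n P \<and> (\<forall>i<n. 0 \<le> lam i \<and> lam i \<le> 1)"
    then have prof: "profile n P" and lam: "\<And>i. i < n \<Longrightarrow> 0 \<le> lam i \<and> lam i \<le> 1" by auto
    obtain \<rho> x where eq: "pm_equilibrium n P \<rho> x" using pm_exists[OF n prof] by blast
    have pr: "pm_price n P = \<rho>" by (rule price[OF prof eq])
    define P' where "P' i = (1 - lam i) *\<^sub>R P i + lam i *\<^sub>R \<rho>" for i
    have rs: "\<rho> \<in> belief_simplex" using eq by (simp add: pm_equilibrium_def)
    have prof': "profile n P'"
      unfolding profile_def P'_def
      using prof rs lam by (auto simp: profile_def intro!: simplex_convex)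
    have eq': "pm_equilibrium n P' \<rho> x"
      unfolding pm_equilibrium_def
    proof (intro conjI)
      show "\<rho> \<in> belief_simplex" by (rule rs)
      show "(\<Sum>i<n. x i) = (\<chi> s. 1)" using eq by (simp add: pm_equilibrium_def)
      show "\<forall>i<n. (\<forall>s. 0 \<le> x i $ s) \<and> \<rho> \<bullet> x i \<le> 1 / real n \<and>
          (\<forall>y. (\<forall>s. 0 \<le> y $ s) \<and> \<rho> \<bullet> y \<le> 1 / real n \<longrightarrow> P' i \<bullet> y \<le> P' i \<bullet> x i)"
      proof (intro allI impI)
        fix i assume i: "i < n"
        have a1: "\<forall>s. 0 \<le> x i $ s" using eq i by (simp add: pm_equilibrium_def)
        have a2: "\<rho> \<bullet> x i \<le> 1 / real n" using pm_budget[OF eq i] by simp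
        have a3: "P' i \<bullet> y \<le> P' i \<bullet> x i" if y: "(\<forall>s. 0 \<le> y $ s) \<and> \<rho> \<bullet> y \<le> 1 / real n" for y
        proof -
        have opt: "P i \<bullet> y \<le> P i \<bullet> x i" using eq i y by (simp add: pm_equilibrium_def)
        have l: "0 \<le> lam i" "lam i \<le> 1" using lam[OF i] by auto
        have "P' i \<bullet> y = (1 - lam i) * (P i \<bullet> y) + lam i * (\<rho> \<bullet> y)"
          by (simp add: P'_def inner_add_left)
        also have "\<dots> \<le> (1 - lam i) * (P i \<bullet> x i) + lam i * (1 / real n)"
          using opt y l by (intro add_mono mult_left_mono) auto
        also have "\<dots> = (1 - lam i) * (P i \<bullet> x i) + lam i * (\<rho> \<bullet> x i)"
          using pm_budget[OF eq i] by simp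
        also have "\<dots> = P' i \<bullet> x i" by (simp add: P'_def inner_add_left)
        finally show "P' i \<bullet> y \<le> P' i \<bullet> x i" .
        qed
        show "(\<forall>s. 0 \<le> x i $ s) \<and> \<rho> \<bullet> x i \<le> 1 / real n \<and>
          (\<forall>y. (\<forall>s. 0 \<le> y $ s) \<and> \<rho> \<bullet> y \<le> 1 / real n \<longrightarrow> P' i \<bullet> y \<le> P' i \<bullet> x i)"
          using a1 a2 a3 by blast
      qed
    qed
    show "pm_price n (\<lambda>i. (1 - lam i) *\<^sub>R P i + lam i *\<^sub>R pm_price n P) = pm_price n P"
    proof -
      have "P' = (\<lambda>i. (1 - lam i) *\<^sub>R P i + lam i *\<^sub>R \<rho>)" by (rule ext) (simp add: P'_def)
      then show ?thesis unfolding pr using price[OF prof' eq'] by simp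
    qed
  qed
qed

end
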